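(* Let $G=(X\cup Y,E)$ be a $d$-regular bipartite graph, $c\ge 1$, $t>0$, and let $C\subseteq X\cup Y$ be a cut with $|\nabla(C)|\le td$. Put $A'=C\cap X$, $W'=C\cap Y$ and $S_X:=\{v\in X\setminus A' : |N(v)\setminus W'|\le 3ct\}$. Then every closed $t$-contracting set $A\subseteq X$ with $|A\mathbin{\triangle}A'|\le ct$ satisfies $A\setminus A'\subseteq S_X$.
   Context: $N(S)$ is the neighbourhood of a vertex set $S$. The value $|\nabla(C)|$ of a cut $C$ is the number of edges with exactly one endpoint in $C$. The closure of $A\subseteq X$ is $[A]:=\{x\in X: N(x)\subseteq N(A)\}$, $A$ is closed if $A=[A]$, and $A$ is $t$-contracting if $|N(A)|<|[A]|+t$. *)

theory Defs
  imports Main "HOL.Real"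
begin

definition nbhd :: "('a \<Rightarrow> 'a \<Rightarrow> bool) \<Rightarrow> 'a set \<Rightarrow> 'a set" where
  "nbhd E S = {y. \<exists>x\<in>S. E x y}"

definition d_regular_bipartite ::
  "'a set \<Rightarrow> 'a set \<Rightarrow> ('a \<Rightarrow> 'a \<Rightarrow> bool) \<Rightarrow> nat \<Rightarrow> bool" where
  "d_regular_bipartite X Y E d \<longleftrightarrow>
     finite X \<and> finite Y \<and> X \<inter> Y = {} \<and>
     (\<forall>u v. E u v \<longrightarrow> E v u) \<and>
     (\<forall>u v. E u v \<longrightarrow> (u \<in> X \<and> v \<in> Y) \<or> (u \<in> Y \<and> v \<in> X)) \<and>
     (\<forall>v \<in> X \<union> Y. card (nbhd E {v}) = d)"

text \<open>Number of edges with exactly one endpoint in C (each edge counted once,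
  oriented from its endpoint in C).\<close>
definition cut_value :: "('a \<Rightarrow> 'a \<Rightarrow> bool) \<Rightarrow> 'a set \<Rightarrow> nat" where
  "cut_value E C = card {(u, v). u \<in> C \<and> v \<notin> C \<and> E u v}"

definition closure_X :: "'a set \<Rightarrow> ('a \<Rightarrow> 'a \<Rightarrow> bool) \<Rightarrow> 'a set \<Rightarrow> 'a set" where
  "closure_X X E A = {x \<in> X. nbhd E {x} \<subseteq> nbhd E A}"

definition closed_X :: "'a set \<Rightarrow> ('a \<Rightarrow> 'a \<Rightarrow> bool) \<Rightarrow> 'a set \<Rightarrow> bool" where
  "closed_X X E A \<longleftrightarrow> A = closure_X X E A"

definition contracting :: "'a set \<Rightarrow> ('a \<Rightarrow> 'a \<Rightarrow> bool) \<Rightarrow> real \<Rightarrow> 'a set \<Rightarrow> bool" where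
  "contracting X E t A \<longleftrightarrow>
     real (card (nbhd E A)) < real (card (closure_X X E A)) + t"

end

theory Submission
  imports Defs
begin

lemma nb1: "nbhd E {x} = {y. E x y}" by (simp add: nbhd_def)

lemma dc:
  assumes "finite S" "finite T" "\<And>u v. E u v \<Longrightarrow> E v u"
  shows "(\<Sum>x\<in>S. card (nbhd E {x} \<inter> T)) = (\<Sum>y\<in>T. card (nbhd E {y} \<inter> S))"
proof -
  have 1: "\<And>x U. finite U \<Longrightarrow> card (nbhd E {x} \<inter> U) = (\<Sum>y\<in>U. if E x y then 1 else 0)"
  proof -
    fix x and U :: "'a set" assume f: "finite U"
    have "nbhd E {x} \<inter> U = {y\<in>U. E x y}" by (auto simp: nb1)
    then show "card (nbhd E {x} \<inter> U) = (\<Sum>y\<in>U. if E x y then 1 else 0)"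
      using f by (simp add: sum.inter_filter[symmetric])
  qed
  have "(\<Sum>x\<in>S. card (nbhd E {x} \<inter> T)) = (\<Sum>x\<in>S. \<Sum>y\<in>T. if E x y then (1::nat) else 0)"
    using 1 assms by simp
  also have "\<dots> = (\<Sum>y\<in>T. \<Sum>x\<in>S. if E x y then (1::nat) else 0)" by (rule sum.swap)
  also have "\<dots> = (\<Sum>y\<in>T. \<Sum>x\<in>S. if E y x then (1::nat) else 0)"
    using assms(3) by (intro sum.cong refl) metis
  also have "\<dots> = (\<Sum>y\<in>T. card (nbhd E {y} \<inter> S))" using 1 assms by simp
  finally show ?thesis .
qed

theorem claim1:
  fixes X Y :: "'a set" and E :: "'a \<Rightarrow> 'a \<Rightarrow> bool" and d :: nat
    and c t :: real and C A :: "'a set"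
  assumes G: "d_regular_bipartite X Y E d"
    and c: "c \<ge> 1" and t: "t > 0"
    and C: "C \<subseteq> X \<union> Y"
    and cut: "real (cut_value E C) \<le> t * real d"
    and A_sub: "A \<subseteq> X"
    and A_closed: "closed_X X E A"
    and A_contr: "contracting X E t A"
    and A_diff: "real (card ((A - (C \<inter> X)) \<union> ((C \<inter> X) - A))) \<le> c * t"
  shows "A - (C \<inter> X) \<subseteq>
    {v \<in> X - (C \<inter> X). real (card (nbhd E {v} - (C \<inter> Y))) \<le> 3 * c * t}"
proof
  fix v assume vA: "v \<in> A - (C \<inter> X)"
  from G have fX: "finite X" and fY: "finite Y" and disj: "X \<inter> Y = {}"
    and sym: "\<And>u v. E u v \<Longrightarrow> E v u"
    and bip: "\<And>u v. E u v \<Longrightarrow> (u \<in> X \<and> v \<in> Y) \<or> (u \<in> Y \<and> v \<in> X)"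
    and deg: "\<And>v. v \<in> X \<union> Y \<Longrightarrow> card (nbhd E {v}) = d"
    unfolding d_regular_bipartite_def by auto
  define N where "N = nbhd E A"
  define A' where "A' = C \<inter> X"
  define W' where "W' = C \<inter> Y"
  define B where "B = N - W'"
  have fA: "finite A" using A_sub fX finite_subset by blast
  have NY: "N \<subseteq> Y" using A_sub bip disj unfolding N_def nbhd_def by blast
  have fN: "finite N" using NY fY finite_subset by blast
  have BN: "B \<subseteq> N" unfolding B_def by auto
  have fB: "finite B" using BN fN finite_subset by blast
  have nbX: "\<And>y. y \<in> Y \<Longrightarrow> nbhd E {y} \<subseteq> X" using bip disj unfolding nbhd_def by blast
  have nbsub: "\<And>x. x \<in> A \<Longrightarrow> nbhd E {x} \<subseteq> N" unfolding N_def nbhd_def by blast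
  have fA': "finite A'" unfolding A'_def using fX by simp
  have fXA: "finite (X - A)" using fX by simp
  have fAA: "finite (A - A')" using fA by simp
  have clA: "closure_X X E A = A" using A_closed unfolding closed_X_def by simp
  have contr: "real (card N) < real (card A) + t"
    using A_contr clA unfolding contracting_def N_def by simp
  have s1: "(\<Sum>y\<in>N. card (nbhd E {y} \<inter> A)) = d * card A"
  proof -
    have "(\<Sum>y\<in>N. card (nbhd E {y} \<inter> A)) = (\<Sum>x\<in>A. card (nbhd E {x} \<inter> N))"
      using dc[OF fA fN, of E] sym by simp
    also have "\<dots> = (\<Sum>x\<in>A. d)"
    proof (rule sum.cong[OF refl])
      fix x assume "x \<in> A"
      then have "nbhd E {x} \<inter> N = nbhd E {x}" using nbsub by blast
      then show "card (nbhd E {x} \<inter> N) = d" using deg \<open>x \<in> A\<close> A_sub by auto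
    qed
    finally show ?thesis by simp
  qed
  have s2: "(\<Sum>y\<in>N. card (nbhd E {y})) = d * card N"
    using deg NY by (simp add: subset_iff)
  have split1: "\<And>y. y \<in> N \<Longrightarrow> card (nbhd E {y}) = card (nbhd E {y} \<inter> A) + card (nbhd E {y} \<inter> (X - A))"
  proof -
    fix y assume y: "y \<in> N"
    have fy: "finite (nbhd E {y})" using nbX[of y] y NY fX finite_subset by blast
    have eq: "nbhd E {y} = (nbhd E {y} \<inter> A) \<union> (nbhd E {y} \<inter> (X - A))" using nbX[of y] y NY by blast
    have "card ((nbhd E {y} \<inter> A) \<union> (nbhd E {y} \<inter> (X - A))) = card (nbhd E {y} \<inter> A) + card (nbhd E {y} \<inter> (X - A))"
      by (rule card_Un_disjoint) (use fy in auto)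
    then show "card (nbhd E {y}) = card (nbhd E {y} \<inter> A) + card (nbhd E {y} \<inter> (X - A))"
      using eq by simp
  qed
  define S1 where "S1 = (\<Sum>y\<in>N. card (nbhd E {y} \<inter> (X - A)))"
  have "d * card N = d * card A + S1"
  proof -
    have "d * card N = (\<Sum>y\<in>N. card (nbhd E {y} \<inter> A) + card (nbhd E {y} \<inter> (X - A)))"
      using s2 split1 by simp
    also have "\<dots> = d * card A + S1" unfolding S1_def using s1 by (simp add: sum.distrib)
    finally show ?thesis .
  qed
  then have "real d * real (card N) = real d * real (card A) + real S1"
    by (simp only: of_nat_add[symmetric] of_nat_mult[symmetric] of_nat_eq_iff)
  moreover have "real d * real (card N) \<le> real d * (real (card A) + t)"
    using contr by (intro mult_left_mono) auto
  ultimately have S1le: "real S1 \<le> real d * t" by (simp add: algebra_simps)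
  define Sa where "Sa = (\<Sum>y\<in>B. card (nbhd E {y} \<inter> A'))"
  define Sb where "Sb = (\<Sum>y\<in>B. card (nbhd E {y} \<inter> (X - A)))"
  define Sc where "Sc = (\<Sum>y\<in>B. card (nbhd E {y} \<inter> (A - A')))"
  have "d * card B = (\<Sum>y\<in>B. card (nbhd E {y}))"
    using deg BN NY by (simp add: subset_iff)
  also have "\<dots> \<le> (\<Sum>y\<in>B. card (nbhd E {y} \<inter> A') + card (nbhd E {y} \<inter> (X - A)) + card (nbhd E {y} \<inter> (A - A')))"
  proof (rule sum_mono)
    fix y assume y: "y \<in> B"
    have fy: "finite (nbhd E {y})" using nbX[of y] y BN NY fX finite_subset by blast
    have "nbhd E {y} \<subseteq> ((nbhd E {y} \<inter> A') \<union> (nbhd E {y} \<inter> (X - A))) \<union> (nbhd E {y} \<inter> (A - A'))"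
      using nbX[of y] y BN NY by blast
    then have "card (nbhd E {y}) \<le> card (((nbhd E {y} \<inter> A') \<union> (nbhd E {y} \<inter> (X - A))) \<union> (nbhd E {y} \<inter> (A - A')))"
      by (rule card_mono[rotated]) (use fy in auto)
    also have "\<dots> \<le> card ((nbhd E {y} \<inter> A') \<union> (nbhd E {y} \<inter> (X - A))) + card (nbhd E {y} \<inter> (A - A'))"
      by (rule card_Un_le)
    also have "\<dots> \<le> card (nbhd E {y} \<inter> A') + card (nbhd E {y} \<inter> (X - A)) + card (nbhd E {y} \<inter> (A - A'))"
      using card_Un_le by simp
    finally show "card (nbhd E {y}) \<le> card (nbhd E {y} \<inter> A') + card (nbhd E {y} \<inter> (X - A)) + card (nbhd E {y} \<inter> (A - A'))" .
  qed
  also have "\<dots> = Sa + Sb + Sc" unfolding Sa_def Sb_def Sc_def by (simp add: sum.distrib)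
  finally have dB: "d * card B \<le> Sa + Sb + Sc" .
  have "Sb \<le> S1" unfolding Sb_def S1_def by (rule sum_mono2[OF fN BN]) auto
  have "Sc = (\<Sum>x\<in>A - A'. card (nbhd E {x} \<inter> B))"
    unfolding Sc_def using dc[OF fAA fB, of E] sym by simp
  also have "\<dots> \<le> (\<Sum>x\<in>A - A'. d)"
  proof (rule sum_mono)
    fix x assume x: "x \<in> A - A'"
    have fx: "finite (nbhd E {x})" using nbsub[of x] x fN finite_subset by blast
    have "card (nbhd E {x} \<inter> B) \<le> card (nbhd E {x})" by (rule card_mono[OF fx]) auto
    then show "card (nbhd E {x} \<inter> B) \<le> d" using deg[of x] x A_sub by auto
  qed
  finally have Scle: "Sc \<le> card (A - A') * d" by simp
  have "card (A - A') \<le> card ((A - A') \<union> (A' - A))"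
    by (rule card_mono) (use fA fA' in auto)
  then have "real (card (A - A')) \<le> c * t" using A_diff unfolding A'_def by linarith
  then have "real d * real (card (A - A')) \<le> real d * (c * t)" by (intro mult_left_mono) auto
  moreover have "real Sc \<le> real d * real (card (A - A'))"
  proof -
    have "real Sc \<le> real (card (A - A') * d)" using Scle by (simp only: of_nat_le_iff)
    then show ?thesis by (simp add: mult.commute)
  qed
  ultimately have Scle': "real Sc \<le> real d * (c * t)" by linarith
  have "Sa = (\<Sum>x\<in>A'. card (nbhd E {x} \<inter> B))"
    unfolding Sa_def using dc[OF fA' fB, of E] sym by simp
  also have "\<dots> = card (SIGMA x:A'. nbhd E {x} \<inter> B)"
    by (rule card_SigmaI[symmetric]) (use fA' fB in auto)
  also have "\<dots> \<le> cut_value E C"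
    unfolding cut_value_def
  proof (rule card_mono)
    have sb: "{(u, v). u \<in> C \<and> v \<notin> C \<and> E u v} \<subseteq> (X \<union> Y) \<times> (X \<union> Y)" using bip by blast
    have "finite ((X \<union> Y) \<times> (X \<union> Y))" using fX fY by simp
    then show "finite {(u, v). u \<in> C \<and> v \<notin> C \<and> E u v}"
      by (rule finite_subset[OF sb])
    show "(SIGMA x:A'. nbhd E {x} \<inter> B) \<subseteq> {(u, v). u \<in> C \<and> v \<notin> C \<and> E u v}"
      using NY unfolding A'_def B_def W'_def by (auto simp: nb1)
  qed
  finally have Sale: "real Sa \<le> t * real d" using cut by linarith
  have main: "real d * real (card B) \<le> real d * (2 * t + c * t)"
  proof -
    have "real d * real (card B) \<le> real Sa + real Sb + real Sc"
    proof -
      have "real (d * card B) \<le> real (Sa + Sb + Sc)" using dB by (simp only: of_nat_le_iff)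
      then show ?thesis by simp
    qed
    moreover have "real Sb \<le> real d * t" using \<open>Sb \<le> S1\<close> S1le by linarith
    ultimately show ?thesis using Sale Scle' by (simp add: algebra_simps)
  qed
  have vX: "v \<in> X" using vA A_sub by blast
  have sub: "nbhd E {v} - (C \<inter> Y) \<subseteq> B" using nbsub[of v] vA unfolding B_def W'_def by blast
  have cardle: "card (nbhd E {v} - (C \<inter> Y)) \<le> card B" by (rule card_mono[OF fB sub])
  have "real (card (nbhd E {v} - (C \<inter> Y))) \<le> 3 * c * t"
  proof (cases "d = 0")
    case True
    have fv: "finite (nbhd E {v})" using nbsub[of v] vA fN finite_subset by blast
    have "nbhd E {v} = {}" using deg[of v] vX True fv by auto
    then show ?thesis using c t by simp
  next
    case False
    then have "real (card B) \<le> 2 * t + c * t" using main by simp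
    moreover have "2 * t \<le> 2 * c * t" using c t by simp
    ultimately show ?thesis using cardle by linarith
  qed
  then show "v \<in> {v \<in> X - (C \<inter> X). real (card (nbhd E {v} - (C \<inter> Y))) \<le> 3 * c * t}"
    using vA vX by blast
qed

end
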